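(* Under the Setting below, for every $k\ge 0$ the iterates of Algorithm 1 satisfy $y^{k+1}\in X$, $\|y^{k+1}\|_0\le\|x^k\|_0$, $f(y^{k+1})\le f(x^k)$, and $$H(x^{k+1})+\frac{\mu}{2}\|x^{k+1}-y^{k+1}\|^2\le H(x^k).$$
   Context: Setting. Let $\lambda>0$, $l,u\in\mathbb{R}^n$ with $l\le u$ componentwise, $X=\{x\in\mathbb{R}^n: l\le x\le u\}$, and $\delta_X$ the indicator function of $X$ ($0$ on $X$, $+\infty$ outside). For $x\in\mathbb{R}^n$, $\|x\|_0$ is the number of nonzero components of $x$ and $I(x)=\{i: x_i=0\}$. Let $f:\mathbb{R}^n\to\mathbb{R}$ be convex and differentiable, bounded from below on $X$, with $\nabla f$ $L$-Lipschitz continuous on $X$ ($L>0$). Define $H(x)=\lambda\|x\|_0+f(x)+\delta_X(x)$. Algorithm 1. Choose $\mu>0$, extrapolation weights $0\le\omega_k\le\omega<1$, and a starting point $x^0\in X$; set $x^{-1}=x^0$. For $k=0,1,2,\dots$: define $y^{k+1}\in\mathbb{R}^n$ by $y^{k+1}_i=x^k_i+\omega_k(x^k_i-x^{k-1}_i)$ for $i\notin I(x^k)$ and $y^{k+1}_i=x^k_i\,(=0)$ for $i\in I(x^k)$ (extrapolation only on the support of $x^k$); if $\langle y^{k+1}-x^k,\nabla f(y^{k+1})\rangle>0$ or $y^{k+1}\notin X$, reset $y^{k+1}:=x^k$; then take any $$x^{k+1}\in\arg\min_{x\in X}\ \lambda\|x\|_0+\frac{L}{2}\Big\|x-y^{k+1}+\frac1L\nabla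 f(y^{k+1})\Big\|^2+\frac{\mu}{2}\|x-y^{k+1}\|^2 .$$ *)

theory Defs
  imports "HOL-Analysis.Analysis"
begin

definition l0norm :: "real^'n \<Rightarrow> nat" where
  "l0norm x = card {i. x $ i \<noteq> 0}"

definition box_set :: "real^'n \<Rightarrow> real^'n \<Rightarrow> (real^'n) set" where
  "box_set l u = {x. \<forall>i. l $ i \<le> x $ i \<and> x $ i \<le> u $ i}"

definition Hobj :: "real \<Rightarrow> (real^'n \<Rightarrow> real) \<Rightarrow> (real^'n) set \<Rightarrow> real^'n \<Rightarrow> ereal" where
  "Hobj lam f X x = (if x \<in> X then ereal (lam * real (l0norm x) + f x) else \<infinity>)"

definition extrap :: "real \<Rightarrow> real^'n \<Rightarrow> real^'n \<Rightarrow> real^'n" where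
  "extrap w xk xkm1 = (\<chi> i. if xk $ i \<noteq> 0 then xk $ i + w * (xk $ i - xkm1 $ i) else xk $ i)"

definition ynext :: "(real^'n \<Rightarrow> real^'n) \<Rightarrow> (real^'n) set \<Rightarrow> real \<Rightarrow> real^'n \<Rightarrow> real^'n \<Rightarrow> real^'n" where
  "ynext g X w xk xkm1 =
     (let yt = extrap w xk xkm1 in
      if inner (yt - xk) (g yt) > 0 \<or> yt \<notin> X then xk else yt)"

definition subobj :: "real \<Rightarrow> real \<Rightarrow> real \<Rightarrow> (real^'n \<Rightarrow> real^'n) \<Rightarrow> real^'n \<Rightarrow> real^'n \<Rightarrow> real" where
  "subobj lam L mu g y x =
     lam * real (l0norm x) + L / 2 * (norm (x - y + (1 / L) *\<^sub>R g y))\<^sup>2 + mu / 2 * (norm (x - y))\<^sup>2"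

end

theory Submission
  imports Defs
begin

lemma line_deriv:
  fixes f :: "real^'n \<Rightarrow> real"
  assumes "\<forall>z. (f has_derivative (\<lambda>h. inner (g z) h)) (at z)"
  shows "((\<lambda>t. f (a + t *\<^sub>R d)) has_real_derivative inner (g (a + t *\<^sub>R d)) d) (at t within S)"
proof -
  have 1: "((\<lambda>t. a + t *\<^sub>R d) has_derivative (\<lambda>s. s *\<^sub>R d)) (at t within S)"
    by (auto intro!: derivative_eq_intros)
  have "((\<lambda>t. f (a + t *\<^sub>R d)) has_derivative (\<lambda>s. inner (g (a + t *\<^sub>R d)) (s *\<^sub>R d))) (at t within S)"
    using has_derivative_compose[OF 1 assms[rule_format, of "a + t *\<^sub>R d"]] by simp
  then show ?thesis unfolding has_field_derivative_def
    by (rule has_derivative_eq_rhs) (auto simp: fun_eq_iff inner_scaleR_right mult.commute)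
qed

lemma box_conv:
  assumes "a \<in> box_set l u" "b \<in> box_set l u" "0 \<le> t" "t \<le> 1"
  shows "a + t *\<^sub>R (b - a) \<in> box_set l u"
proof -
  have "l $ i \<le> a $ i + t * (b $ i - a $ i) \<and> a $ i + t * (b $ i - a $ i) \<le> u $ i" for i
  proof -
    have h: "l $ i \<le> a $ i" "a $ i \<le> u $ i" "l $ i \<le> b $ i" "b $ i \<le> u $ i"
      using assms unfolding box_set_def by auto
    have e: "a $ i + t * (b $ i - a $ i) = (1 - t) * a $ i + t * b $ i" by (simp add: algebra_simps)
    have "(1 - t) * l $ i \<le> (1 - t) * a $ i" "t * l $ i \<le> t * b $ i"
         "(1 - t) * a $ i \<le> (1 - t) * u $ i" "t * b $ i \<le> t * u $ i"
      using h assms(3,4) by (auto intro: mult_left_mono)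
    then show ?thesis unfolding e by (simp add: algebra_simps)
  qed
  then show ?thesis unfolding box_set_def by simp
qed

lemma descent:
  fixes f :: "real^'n \<Rightarrow> real"
  assumes fg: "\<forall>z. (f has_derivative (\<lambda>h. inner (g z) h)) (at z)"
    and lip: "\<forall>a\<in>box_set l u. \<forall>b\<in>box_set l u. norm (g a - g b) \<le> L * norm (a - b)"
    and L: "L > 0"
    and a: "a \<in> box_set l u" and b: "b \<in> box_set l u"
  shows "f b \<le> f a + inner (g a) (b - a) + L / 2 * (norm (b - a))\<^sup>2"
proof -
  define d where "d = b - a"
  define \<phi> where "\<phi> t = f (a + t *\<^sub>R d) - t * inner (g a) d - L / 2 * t\<^sup>2 * (norm d)\<^sup>2" for t
  have "\<phi> 0 \<ge> \<phi> 1"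
  proof (rule DERIV_nonpos_imp_nonincreasing[of 0 1 \<phi>])
    fix t :: real assume t: "0 \<le> t" "t \<le> 1"
    have D: "(\<phi> has_real_derivative inner (g (a + t *\<^sub>R d)) d - inner (g a) d - L / 2 * (2 * t) * (norm d)\<^sup>2) (at t)"
      unfolding \<phi>_def
      by (auto intro!: derivative_eq_intros line_deriv[OF fg, where S=UNIV, simplified])
    have inb: "a + t *\<^sub>R d \<in> box_set l u" using box_conv[OF a b t] d_def by simp
    have "inner (g (a + t *\<^sub>R d)) d - inner (g a) d = inner (g (a + t *\<^sub>R d) - g a) d"
      by (simp add: inner_diff_left)
    also have "\<dots> \<le> norm (g (a + t *\<^sub>R d) - g a) * norm d" by (rule norm_cauchy_schwarz)
    also have "\<dots> \<le> L * norm (t *\<^sub>R d) * norm d"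
      using lip[rule_format, OF inb a] by (intro mult_right_mono) auto
    also have "\<dots> = L * t * (norm d)\<^sup>2" using t by (simp add: power2_eq_square)
    finally have "inner (g (a + t *\<^sub>R d)) d - inner (g a) d \<le> L * t * (norm d)\<^sup>2" .
    then show "\<exists>y. (\<phi> has_real_derivative y) (at t) \<and> y \<le> 0" using D by (intro exI[of _ "inner (g (a + t *\<^sub>R d)) d - inner (g a) d - L / 2 * (2 * t) * (norm d)\<^sup>2"]) auto
  qed simp
  then show ?thesis unfolding \<phi>_def d_def by simp
qed

lemma tangent:
  fixes f :: "real^'n \<Rightarrow> real"
  assumes fc: "convex_on UNIV f"
    and fg: "\<forall>z. (f has_derivative (\<lambda>h. inner (g z) h)) (at z)"
  shows "f b - f a \<ge> inner (g a) (b - a)"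
proof -
  define h where "h t = f (a + t *\<^sub>R (b - a))" for t
  have hc: "convex_on UNIV h"
  proof (rule convex_onI)
    fix t x y :: real assume t: "0 < t" "t < 1"
    have e: "a + ((1 - t) *\<^sub>R x + t *\<^sub>R y) *\<^sub>R (b - a) = (1 - t) *\<^sub>R (a + x *\<^sub>R (b - a)) + t *\<^sub>R (a + y *\<^sub>R (b - a))"
      by (simp add: algebra_simps)
    show "h ((1 - t) *\<^sub>R x + t *\<^sub>R y) \<le> (1 - t) * h x + t * h y"
      unfolding h_def e using convex_onD[OF fc, of t] t by simp
  qed simp
  have "h 1 - h 0 \<ge> inner (g a) (b - a) * (1 - 0)"
  proof (rule convex_on_imp_above_tangent[OF hc])
    show "(h has_real_derivative inner (g a) (b - a)) (at 0 within UNIV)"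
      unfolding h_def using line_deriv[OF fg, where a=a and t=0 and d="b - a" and S=UNIV] by simp
  qed auto
  then show ?thesis by (simp add: h_def)
qed

theorem mainTheorem2:
  fixes lam L mu \<omega> :: real
    and l u :: "real^'n"
    and f :: "real^'n \<Rightarrow> real"
    and g :: "real^'n \<Rightarrow> real^'n"
    and w :: "nat \<Rightarrow> real"
    and x y :: "nat \<Rightarrow> real^'n"
  assumes lam_pos: "lam > 0"
    and lu: "\<forall>i. l $ i \<le> u $ i"
    and f_convex: "convex_on UNIV f"
    and f_grad: "\<forall>z. (f has_derivative (\<lambda>h. inner (g z) h)) (at z)"
    and f_bdd: "bdd_below (f ` box_set l u)"
    and L_pos: "L > 0"
    and g_lip: "\<forall>a\<in>box_set l u. \<forall>b\<in>box_set l u. norm (g a - g b) \<le> L * norm (a - b)"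
    and mu_pos: "mu > 0"
    and w_bounds: "\<forall>k. 0 \<le> w k \<and> w k \<le> \<omega>"
    and om_lt1: "\<omega> < 1"
    and x0: "x 0 \<in> box_set l u"
    and y_def: "\<forall>k. y (k + 1) = ynext g (box_set l u) (w k) (x k)
                                   (if k = 0 then x 0 else x (k - 1))"
    and x_step: "\<forall>k. x (k + 1) \<in> box_set l u \<and>
                   (\<forall>z\<in>box_set l u. subobj lam L mu g (y (k + 1)) (x (k + 1))
                                    \<le> subobj lam L mu g (y (k + 1)) z)"
  shows "\<forall>k. y (k + 1) \<in> box_set l u
            \<and> l0norm (y (k + 1)) \<le> l0norm (x k)
            \<and> f (y (k + 1)) \<le> f (x k)
            \<and> Hobj lam f (box_set l u) (x (k + 1))
                + ereal (mu / 2 * (norm (x (k + 1) - y (k + 1)))\<^sup>2)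
              \<le> Hobj lam f (box_set l u) (x k)"
proof (intro allI)
  fix k
  let ?X = "box_set l u"
  have xin: "x j \<in> ?X" for j
    using x0 x_step by (cases j) auto
  define xp where "xp = (if k = 0 then x 0 else x (k - 1))"
  define yt where "yt = extrap (w k) (x k) xp"
  have yk: "y (k + 1) = (if inner (yt - x k) (g yt) > 0 \<or> yt \<notin> ?X then x k else yt)"
    using y_def unfolding ynext_def yt_def xp_def Let_def by simp
  have yX: "y (k + 1) \<in> ?X" using yk xin by auto
  have supp: "{i. yt $ i \<noteq> 0} \<subseteq> {i. x k $ i \<noteq> 0}"
    unfolding yt_def extrap_def by auto
  have l0: "l0norm (y (k + 1)) \<le> l0norm (x k)"
  proof (cases "y (k + 1) = x k")
    case False
    then have "y (k + 1) = yt" using yk by (auto split: if_splits)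
    then show ?thesis unfolding l0norm_def using supp by (auto intro: card_mono)
  qed simp
  have fy: "f (y (k + 1)) \<le> f (x k)"
  proof (cases "y (k + 1) = x k")
    case False
    then have e: "y (k + 1) = yt" and c: "inner (yt - x k) (g yt) \<le> 0" using yk by (auto split: if_splits)
    have "f (x k) - f yt \<ge> inner (g yt) (x k - yt)" by (rule tangent[OF f_convex f_grad])
    moreover have "inner (g yt) (x k - yt) = - inner (yt - x k) (g yt)"
      by (simp add: inner_commute inner_diff_right inner_diff_left)
    ultimately show ?thesis using e c by simp
  qed simp
  define yy where "yy = y (k + 1)"
  define xx where "xx = x (k + 1)"
  define dd where "dd = xx - yy"
  define gg where "gg = g yy"
  have xxX: "xx \<in> ?X" using xin xx_def by simp
  have yyX: "yy \<in> ?X" using yX yy_def by simp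
  have min: "subobj lam L mu g yy xx \<le> subobj lam L mu g yy yy"
    using x_step yyX unfolding xx_def yy_def by auto
  have nexp: "(norm (dd + (1 / L) *\<^sub>R gg))\<^sup>2 = (norm dd)\<^sup>2 + 2 / L * inner dd gg + (1 / L)\<^sup>2 * (norm gg)\<^sup>2"
    unfolding power2_norm_eq_inner by (simp add: inner_add_left inner_add_right inner_commute power2_eq_square algebra_simps)
  have n2: "(norm ((1 / L) *\<^sub>R gg))\<^sup>2 = (1 / L)\<^sup>2 * (norm gg)\<^sup>2"
    using L_pos by (simp add: power_divide)
  have min2: "lam * real (l0norm xx) + L / 2 * ((norm dd)\<^sup>2 + 2 / L * inner dd gg + (1 / L)\<^sup>2 * (norm gg)\<^sup>2) + mu / 2 * (norm dd)\<^sup>2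
      \<le> lam * real (l0norm yy) + L / 2 * ((1 / L)\<^sup>2 * (norm gg)\<^sup>2)"
  proof -
    have "subobj lam L mu g yy xx = lam * real (l0norm xx) + L / 2 * (norm (dd + (1 / L) *\<^sub>R gg))\<^sup>2 + mu / 2 * (norm dd)\<^sup>2"
      unfolding subobj_def dd_def gg_def by simp
    moreover have "subobj lam L mu g yy yy = lam * real (l0norm yy) + L / 2 * (norm ((1 / L) *\<^sub>R gg))\<^sup>2"
      unfolding subobj_def gg_def by simp
    ultimately show ?thesis using min unfolding nexp n2 by simp
  qed
  have key: "lam * real (l0norm xx) + L / 2 * (norm dd)\<^sup>2 + inner dd gg + mu / 2 * (norm dd)\<^sup>2
      \<le> lam * real (l0norm yy)"
    using min2 L_pos by (simp add: algebra_simps)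
  have desc: "f xx \<le> f yy + inner gg dd + L / 2 * (norm dd)\<^sup>2"
    using descent[OF f_grad g_lip L_pos yyX xxX] unfolding dd_def gg_def by simp
  have l0r: "lam * real (l0norm yy) \<le> lam * real (l0norm (x k))"
    using l0 lam_pos unfolding yy_def by simp
  have real: "lam * real (l0norm xx) + f xx + mu / 2 * (norm dd)\<^sup>2 \<le> lam * real (l0norm (x k)) + f (x k)"
    using key desc l0r fy unfolding yy_def[symmetric] by (simp add: inner_commute)
  show "y (k + 1) \<in> ?X \<and> l0norm (y (k + 1)) \<le> l0norm (x k) \<and> f (y (k + 1)) \<le> f (x k)
            \<and> Hobj lam f ?X (x (k + 1)) + ereal (mu / 2 * (norm (x (k + 1) - y (k + 1)))\<^sup>2)
              \<le> Hobj lam f ?X (x k)"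
    using yX l0 fy real xxX xin[of k] unfolding Hobj_def xx_def[symmetric] yy_def[symmetric] dd_def[symmetric]
    by simp
qed

end
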